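(* Let $H$ be an infinite-dimensional separable complex Hilbert space and let $A \in C([0,1],L(H))$. Then there exist mutually orthogonal infinite-dimensional closed subspaces $M_k\subset H$, $k\in\mathbb N$, such that \[ W_e\bigl(P_{M_k}A(t){\upharpoonright}_{M_k}\bigr)=W_e(A(t)) \] for all $k\in\mathbb N$ and $t\in[0,1]$.
   Context: $P_M$ is the orthogonal projection onto $M$ and $A{\upharpoonright}_M$ the restriction to $M$, so $P_MA{\upharpoonright}_M\in L(M)$. For $T\in L(K)$ on an infinite-dimensional Hilbert space $K$, the essential numerical range $W_e(T)$ is the set of all $\lambda\in\mathbb C$ for which there is an orthonormal sequence $(u_n)$ in $K$ with $\langle Tu_n,u_n\rangle\to\lambda$. *)

theory Defs
  imports "HOL-Analysis.Analysis"
begin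

text \<open>The HOL distribution has no complex inner product
spaces, so we introduce the class of complex Hilbert spaces: a real Banach space
carrying a complex scalar multiplication (extending the real one) and a complex
inner product, linear in the first argument, conjugate symmetric, and inducing the norm.\<close>

class chilbert = banach +
  fixes scaleC :: "complex \<Rightarrow> 'a \<Rightarrow> 'a"
    and cinner :: "'a \<Rightarrow> 'a \<Rightarrow> complex"
  assumes scaleC_add_right: "scaleC c (x + y) = scaleC c x + scaleC c y"
    and scaleC_add_left: "scaleC (c + d) x = scaleC c x + scaleC d x"
    and scaleC_scaleC: "scaleC c (scaleC d x) = scaleC (c * d) x"
    and scaleC_one: "scaleC 1 x = x"
    and scaleR_scaleC: "scaleR r x = scaleC (complex_of_real r) x"
    and cinner_add_left: "cinner (x + y) z = cinner x z + cinner y z"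
    and cinner_scaleC_left: "cinner (scaleC c x) y = c * cinner x y"
    and cinner_commute: "cinner y x = cnj (cinner x y)"
    and cinner_nonneg: "0 \<le> Re (cinner x x)"
    and norm_cinner: "norm x = sqrt (Re (cinner x x))"

definition cspan :: "'a::chilbert set \<Rightarrow> 'a set" where
  "cspan F = {(\<Sum>x\<in>S. scaleC (c x) x) | S c. finite S \<and> S \<subseteq> F}"

definition csubspace :: "'a::chilbert set \<Rightarrow> bool" where
  "csubspace M \<longleftrightarrow> 0 \<in> M \<and> (\<forall>x\<in>M. \<forall>y\<in>M. x + y \<in> M) \<and> (\<forall>c. \<forall>x\<in>M. scaleC c x \<in> M)"

definition inf_dim :: "'a::chilbert set \<Rightarrow> bool" where
  "inf_dim M \<longleftrightarrow> (\<forall>F. finite F \<and> F \<subseteq> M \<longrightarrow> cspan F \<noteq> M)"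

definition separable_space :: "'a::metric_space itself \<Rightarrow> bool" where
  "separable_space _ \<longleftrightarrow> (\<exists>D::'a set. countable D \<and> closure D = UNIV)"

text \<open>Bounded complex-linear operators are the elements of type 'a \<Rightarrow>L 'a
(bounded real-linear maps) which are in addition complex linear.\<close>
definition clinear_op :: "('a::chilbert \<Rightarrow>\<^sub>L 'a) \<Rightarrow> bool" where
  "clinear_op T \<longleftrightarrow> (\<forall>c x. blinfun_apply T (scaleC c x) = scaleC c (blinfun_apply T x))"

definition orthonormal_seq :: "(nat \<Rightarrow> 'a::chilbert) \<Rightarrow> bool" where
  "orthonormal_seq u \<longleftrightarrow> (\<forall>n m. cinner (u n) (u m) = (if n = m then 1 else 0))"

definition cproj :: "'a::chilbert set \<Rightarrow> 'a \<Rightarrow> 'a" where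
  "cproj M x = (THE y. y \<in> M \<and> (\<forall>z\<in>M. cinner (x - y) z = 0))"

text \<open>Essential numerical range of an operator T on the (infinite-dimensional)
Hilbert space K (a closed subspace of H); only the values of T on K matter.\<close>
definition ess_numrange :: "'a::chilbert set \<Rightarrow> ('a \<Rightarrow> 'a) \<Rightarrow> complex set" where
  "ess_numrange K T = {l. \<exists>u. (\<forall>n. u n \<in> K) \<and> orthonormal_seq u \<and>
      (\<lambda>n. cinner (T (u n)) (u n)) \<longlonglongrightarrow> l}"

end

theory Submission
  imports Defs
begin


interpretation cvs: vector_space "scaleC :: complex \<Rightarrow> 'a::chilbert \<Rightarrow> 'a"
  by unfold_locales (auto simp: scaleC_add_right scaleC_add_left scaleC_scaleC scaleC_one)

lemma cspan_eq: "cspan = cvs.span" unfolding cspan_def cvs.span_explicit by (auto intro!: ext)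
lemma csubspace_eq: "csubspace = cvs.subspace" unfolding csubspace_def cvs.subspace_def by (auto intro!: ext)

context chilbert begin

lemma cinner_zero_left[simp]: "cinner 0 y = 0"
  using cinner_add_left[of 0 0 y] by simp

lemma cinner_add_right: "cinner x (y + z) = cinner x y + cinner x z"
  by (metis cinner_add_left cinner_commute complex_cnj_add)

lemma cinner_zero_right[simp]: "cinner x 0 = 0"
  using cinner_add_right[of x 0 0] by simp

lemma cinner_scaleC_right: "cinner x (scaleC c y) = cnj c * cinner x y"
  by (metis cinner_scaleC_left cinner_commute complex_cnj_mult)

lemma cinner_minus_left: "cinner (- x) y = - cinner x y"
proof -
  have h: "cinner x y + cinner (-x) y = 0" using cinner_add_left[of x "-x" y] by simp
  have "cinner (-x) y = (cinner x y + cinner (-x) y) - cinner x y" by simp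
  also have "\<dots> = - cinner x y" using h by simp
  finally show ?thesis .
qed

lemma cinner_minus_right: "cinner x (- y) = - cinner x y"
  by (metis cinner_minus_left cinner_commute complex_cnj_minus)

lemma cinner_diff_left: "cinner (x - y) z = cinner x z - cinner y z"
  using cinner_add_left[of x "-y" z] by (simp add: cinner_minus_left)

lemma cinner_diff_right: "cinner x (y - z) = cinner x y - cinner x z"
  using cinner_add_right[of x y "-z"] by (simp add: cinner_minus_right)

lemma cinner_sum_left: "cinner (sum f S) y = (\<Sum>i\<in>S. cinner (f i) y)"
  by (induction S rule: infinite_finite_induct) (auto simp: cinner_add_left)

lemma cinner_sum_right: "cinner y (sum f S) = (\<Sum>i\<in>S. cinner y (f i))"
  by (induction S rule: infinite_finite_induct) (auto simp: cinner_add_right)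

lemma cinner_scaleR_left: "cinner (scaleR r x) y = of_real r * cinner x y"
  by (simp add: scaleR_scaleC cinner_scaleC_left)

lemma cinner_scaleR_right: "cinner x (scaleR r y) = of_real r * cinner x y"
  by (simp add: scaleR_scaleC cinner_scaleC_right)

lemma cinner_self: "cinner x x = complex_of_real ((norm x)^2)"
proof -
  have "Im (cinner x x) = Im (cnj (cinner x x))" using cinner_commute[of x x] by simp
  then have "Im (cinner x x) = 0" by simp
  then show ?thesis using norm_cinner[of x] cinner_nonneg[of x]
    by (simp add: complex_eq_iff)
qed


lemma norm_scaleC: "norm (scaleC c x) = cmod c * norm x"
proof -
  have "cinner (scaleC c x) (scaleC c x) = (c * cnj c) * of_real ((norm x)^2)"
    by (simp add: cinner_scaleC_left cinner_scaleC_right cinner_self[of x] mult.assoc)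
  also have "\<dots> = of_real ((cmod c * norm x)^2)"
    by (simp add: complex_norm_square[symmetric] power_mult_distrib)
  finally have "(norm (scaleC c x))^2 = (cmod c * norm x)^2"
    using cinner_self[of "scaleC c x"] by (metis of_real_eq_iff)
  then show ?thesis by (simp add: power2_eq_iff_nonneg)
qed

lemma scaleC_zero_right[simp]: "scaleC c 0 = 0"
  using scaleC_add_right[of c 0 0] by simp

lemma scaleC_zero_left[simp]: "scaleC 0 x = 0"
  using scaleC_add_left[of 0 0 x] by simp

end

lemma scaleC_minus_one: "scaleC (-1) x = - x"
proof -
  have "- x = scaleR (-1) x" by (rule scaleR_minus1_left[symmetric])
  also have "\<dots> = scaleC (-1) x" by (simp add: scaleR_scaleC)
  finally show ?thesis by simp
qed

lemma cauchy_schwarz: "cmod (cinner x y) \<le> norm x * norm y"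
proof (cases "y = 0")
  case True then show ?thesis by simp
next
  case False
  define a where "a = cinner x y"
  define r where "r = (norm y)^2"
  have r: "r > 0" using False by (simp add: r_def)
  define c where "c = a / of_real r"
  define z where "z = x - scaleC c y"
  have yx: "cinner y x = cnj a" unfolding a_def by (rule cinner_commute)
  have yy: "cinner y y = of_real r" unfolding r_def by (rule cinner_self)
  have "cinner z z = cinner x x - cnj c * a - c * cnj a + c * cnj c * of_real r"
    unfolding z_def
    by (simp add: cinner_diff_left cinner_diff_right cinner_scaleC_left cinner_scaleC_right
        yx yy a_def[symmetric] algebra_simps)
  also have "c * cnj c = of_real ((cmod a)^2 / r^2)"
    unfolding c_def by (simp add: complex_norm_square[symmetric] power_divide power2_eq_square)
  also have "cnj c * a = (a * cnj a) / of_real r"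
    unfolding c_def by (simp add: mult.commute)
  also have "c * cnj a = (a * cnj a) / of_real r"
    unfolding c_def by simp
  also have "a * cnj a = of_real ((cmod a)^2)"
    by (metis complex_norm_square of_real_power)
  also have "cinner x x = of_real ((norm x)^2)" by (rule cinner_self)
  finally have "cinner z z = of_real ((norm x)^2 - (cmod a)^2 / r - (cmod a)^2 / r + (cmod a)^2 / r^2 * r)"
    by (simp del: of_real_power)
  also have "(cmod a)^2 / r^2 * r = (cmod a)^2 / r" using r by (simp add: power2_eq_square)
  finally have "cinner z z = of_real ((norm x)^2 - (cmod a)^2 / r)" by simp
  then have "0 \<le> (norm x)^2 - (cmod a)^2 / r"
    using cinner_nonneg[of z] by simp
  then have "(cmod a)^2 / r \<le> (norm x)^2" by simp
  then have "(cmod a)^2 \<le> (norm x)^2 * r" using r by (simp add: divide_le_eq)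
  then have "(cmod a)^2 \<le> (norm x * norm y)^2" by (simp add: r_def power_mult_distrib)
  then show ?thesis unfolding a_def
    using power2_le_imp_le by force
qed




lemma bl_cinner_left: "bounded_linear (\<lambda>x::'a::chilbert. cinner x y)"
  by (rule bounded_linear_intro[where K="norm y"])
     (auto simp: cinner_add_left cinner_scaleR_left scaleR_conv_of_real cauchy_schwarz)

lemma bl_cinner_right: "bounded_linear (\<lambda>y::'a::chilbert. cinner x y)"
  by (rule bounded_linear_intro[where K="norm x"])
     (auto simp: cinner_add_right cinner_scaleR_right scaleR_conv_of_real,
      metis cauchy_schwarz mult.commute)

lemma bl_scaleC: "bounded_linear (scaleC c :: 'a::chilbert \<Rightarrow> 'a)"
  by (rule bounded_linear_intro[where K="cmod c"])
     (auto simp: scaleC_add_right scaleR_scaleC scaleC_scaleC norm_scaleC mult.commute)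

lemma closed_orth: "closed {x::'a::chilbert. cinner x y = 0}"
  by (rule closed_Collect_eq[OF linear_continuous_on[OF bl_cinner_left] continuous_on_const])

lemma closed_orth': "closed {y::'a::chilbert. cinner x y = 0}"
  by (rule closed_Collect_eq[OF linear_continuous_on[OF bl_cinner_right] continuous_on_const])

lemma csubspace_closure:
  fixes S :: "'a::chilbert set"
  assumes S: "csubspace S" shows "csubspace (closure S)"
proof -
  have 0: "0 \<in> S" and add: "\<And>x y. x \<in> S \<Longrightarrow> y \<in> S \<Longrightarrow> x + y \<in> S"
    and sc: "\<And>c x. x \<in> S \<Longrightarrow> scaleC c x \<in> S"
    using S unfolding csubspace_def by auto
  have A: "x + y \<in> closure S" if x: "x \<in> closure S" and y: "y \<in> closure S" for x y
  proof -
    obtain xs where xs: "\<forall>n. xs n \<in> S" "xs \<longlonglongrightarrow> x" using x closure_sequential by metis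
    obtain ys where ys: "\<forall>n. ys n \<in> S" "ys \<longlonglongrightarrow> y" using y closure_sequential by metis
    have "(\<lambda>n. xs n + ys n) \<longlonglongrightarrow> x + y" by (intro tendsto_add xs ys)
    moreover have "\<forall>n. xs n + ys n \<in> S" using xs ys add by simp
    ultimately show "x + y \<in> closure S" unfolding closure_sequential
      by (intro exI[where x="\<lambda>n. xs n + ys n"]) simp
  qed
  have B: "scaleC c x \<in> closure S" if x: "x \<in> closure S" for c x
  proof -
    obtain xs where xs: "\<forall>n. xs n \<in> S" "xs \<longlonglongrightarrow> x" using x closure_sequential by metis
    have "(\<lambda>n. scaleC c (xs n)) \<longlonglongrightarrow> scaleC c x"
      by (rule bounded_linear.tendsto[OF bl_scaleC xs(2)])
    moreover have "\<forall>n. scaleC c (xs n) \<in> S" using xs sc by simp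
    ultimately show "scaleC c x \<in> closure S" unfolding closure_sequential
      by (intro exI[where x="\<lambda>n. scaleC c (xs n)"]) simp
  qed
  have "0 \<in> closure S" using 0 closure_subset by blast
  then show ?thesis unfolding csubspace_def using A B by blast
qed

lemma csubspace_cspan: "csubspace (cspan S)"
  by (simp add: cspan_eq csubspace_eq)

lemma cspan_superset: "S \<subseteq> cspan S"
  by (simp add: cspan_eq cvs.span_superset)

lemma closure_cspan_min:
  fixes S Z :: "'a::chilbert set"
  assumes "S \<subseteq> Z" "closed Z" "csubspace Z"
  shows "closure (cspan S) \<subseteq> Z"
proof -
  have "cspan S \<subseteq> Z" using assms cvs.span_minimal by (simp add: cspan_eq csubspace_eq)
  then show ?thesis using assms(2) closure_minimal by blast
qed

lemma csubspace_orth: "csubspace {x::'a::chilbert. cinner x y = 0}"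
  unfolding csubspace_def by (auto simp: cinner_add_left cinner_scaleC_left)

lemma csubspace_orth': "csubspace {y::'a::chilbert. cinner x y = 0}"
  unfolding csubspace_def by (auto simp: cinner_add_right cinner_scaleC_right)

definition orthonormal_on :: "'b set \<Rightarrow> ('b \<Rightarrow> 'a::chilbert) \<Rightarrow> bool" where
  "orthonormal_on I w \<longleftrightarrow> (\<forall>i\<in>I. \<forall>j\<in>I. cinner (w i) (w j) = (if i = j then 1 else 0))"

lemma cinner_sum_orth:
  assumes "orthonormal_on I w" "finite I" "j \<in> I"
  shows "cinner (\<Sum>i\<in>I. scaleC (c i) (w i)) (w j) = c j"
proof -
  have "cinner (\<Sum>i\<in>I. scaleC (c i) (w i)) (w j) = (\<Sum>i\<in>I. c i * (if i = j then 1 else 0))"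
    using assms(1,3) by (auto simp: cinner_sum_left cinner_scaleC_left orthonormal_on_def intro!: sum.cong)
  also have "\<dots> = c j" using assms(2,3) by (simp add: if_distrib cong: if_cong)
  finally show ?thesis .
qed

lemma norm_sum_orth:
  assumes "orthonormal_on I w" "finite I"
  shows "(norm (\<Sum>i\<in>I. scaleC (c i) (w i)))^2 = (\<Sum>i\<in>I. (cmod (c i))^2)"
proof -
  let ?s = "\<Sum>i\<in>I. scaleC (c i) (w i)"
  have "cinner ?s ?s = (\<Sum>i\<in>I. cnj (c i) * cinner ?s (w i))"
    by (simp add: cinner_sum_right cinner_scaleC_right)
  also have "\<dots> = (\<Sum>i\<in>I. cnj (c i) * c i)"
    using assms by (auto intro!: sum.cong simp: cinner_sum_orth)
  also have "\<dots> = of_real (\<Sum>i\<in>I. (cmod (c i))^2)"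
    unfolding of_real_sum by (intro sum.cong refl) (metis complex_norm_square mult.commute of_real_power)
  finally show ?thesis using cinner_self[of ?s] by (metis of_real_eq_iff)
qed

lemma pythagoras:
  fixes a b :: "'a::chilbert"
  assumes "cinner a b = 0"
  shows "(norm (a + b))^2 = (norm a)^2 + (norm b)^2"
proof -
  have ba: "cinner b a = 0" using assms cinner_commute[of a b] by simp
  have "cinner (a + b) (a + b) = cinner a a + cinner b b"
    by (simp add: cinner_add_left cinner_add_right assms ba)
  also have "\<dots> = of_real ((norm a)^2 + (norm b)^2)" by (simp add: cinner_self[of a] cinner_self[of b])
  finally show ?thesis using cinner_self[of "a+b"] by (metis of_real_eq_iff)
qed

lemma bessel:
  fixes v :: "'a::chilbert"
  assumes "orthonormal_on I w" "finite I"
  shows "(\<Sum>i\<in>I. (cmod (cinner v (w i)))^2) \<le> (norm v)^2"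
proof -
  define s where "s = (\<Sum>i\<in>I. scaleC (cinner v (w i)) (w i))"
  have orth: "cinner (v - s) (w j) = 0" if "j \<in> I" for j
    using cinner_sum_orth[OF assms that, of "\<lambda>i. cinner v (w i)"] by (simp add: s_def cinner_diff_left)
  have "cinner (v - s) s = 0"
    unfolding s_def by (simp add: cinner_sum_right cinner_scaleC_right orth[unfolded s_def])
  then have "(norm (v - s + s))^2 = (norm (v - s))^2 + (norm s)^2" by (rule pythagoras)
  then have "(norm s)^2 \<le> (norm v)^2" by simp
  moreover have "(norm s)^2 = (\<Sum>i\<in>I. (cmod (cinner v (w i)))^2)"
    unfolding s_def using assms by (rule norm_sum_orth)
  ultimately show ?thesis by simp
qed

lemma orthonormal_seq_on: "orthonormal_seq u \<Longrightarrow> orthonormal_on I u"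
  by (simp add: orthonormal_seq_def orthonormal_on_def)

lemma orthonormal_seq_coeff_zero:
  fixes v :: "'a::chilbert"
  assumes "orthonormal_seq u"
  shows "(\<lambda>m. cinner v (u m)) \<longlonglongrightarrow> 0" "(\<lambda>m. cinner (u m) v) \<longlonglongrightarrow> 0"
proof -
  have "summable (\<lambda>m. (cmod (cinner v (u m)))^2)"
    by (rule summableI_nonneg_bounded[where x="(norm v)^2"])
       (auto intro!: bessel orthonormal_seq_on assms)
  then have "(\<lambda>m. (cmod (cinner v (u m)))^2) \<longlonglongrightarrow> 0" by (rule summable_LIMSEQ_zero)
  then have "(\<lambda>m. sqrt ((cmod (cinner v (u m)))^2)) \<longlonglongrightarrow> sqrt 0" by (rule tendsto_real_sqrt)
  then have "(\<lambda>m. norm (cinner v (u m))) \<longlonglongrightarrow> 0" by simp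
  then show 1: "(\<lambda>m. cinner v (u m)) \<longlonglongrightarrow> 0" by (simp add: tendsto_norm_zero_iff)
  have "(\<lambda>m. cnj (cinner v (u m))) \<longlonglongrightarrow> cnj 0" by (intro tendsto_cnj 1)
  moreover have "cnj (cinner v (u m)) = cinner (u m) v" for m by (rule cinner_commute[symmetric])
  ultimately show "(\<lambda>m. cinner (u m) v) \<longlonglongrightarrow> 0" by simp
qed




lemma bl_scaleC_left: "bounded_linear (\<lambda>c. scaleC c (w::'a::chilbert))"
  by (rule bounded_linear_intro[where K="norm w"])
     (auto simp: scaleC_add_left scaleR_scaleC scaleC_scaleC norm_scaleC scaleR_conv_of_real)

lemma csubspace_sum:
  assumes "csubspace K" "\<And>i. i \<in> I \<Longrightarrow> f i \<in> K" shows "sum f I \<in> K"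
  using assms by (simp add: csubspace_eq cvs.subspace_sum)

lemma csubspace_diff:
  assumes "csubspace K" "x \<in> K" "y \<in> K" shows "x - y \<in> K"
  using assms by (simp add: csubspace_eq cvs.subspace_diff)

lemma csubspace_scaleC:
  assumes "csubspace K" "x \<in> K" shows "scaleC c x \<in> K"
  using assms by (simp add: csubspace_def)

lemma csubspace_scaleR:
  assumes "csubspace K" "x \<in> K" shows "scaleR r x \<in> K"
  using assms by (simp add: csubspace_def scaleR_scaleC)

lemma key:
  fixes T :: "'a::chilbert \<Rightarrow>\<^sub>L 'a" and w :: "nat \<Rightarrow> 'a"
  assumes K: "csubspace K" and u: "orthonormal_seq u" "\<forall>m. u m \<in> K"
    and lim: "(\<lambda>m. cinner (blinfun_apply T (u m)) (u m)) \<longlonglongrightarrow> l"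
    and w: "orthonormal_on {..<p} w" "\<forall>i<p. w i \<in> K" and e: "e > 0"
  shows "\<exists>x\<in>K. norm x = 1 \<and> (\<forall>i<p. cinner x (w i) = 0) \<and> cmod (cinner (blinfun_apply T x) x - l) < e"
proof -
  define P where "P x = (\<Sum>i<p. scaleC (cinner x (w i)) (w i))" for x
  define y where "y m = u m - P (u m)" for m
  have nu: "norm (u m) = 1" for m
  proof -
    have "cinner (u m) (u m) = 1" using u(1) by (simp add: orthonormal_seq_def)
    then have "(norm (u m))^2 = 1" by (metis cinner_self of_real_eq_1_iff)
    then show ?thesis using norm_ge_zero[of "u m"] by (simp add: power2_eq_1_iff) 
  qed
  have yorth: "cinner (y m) (w j) = 0" if "j < p" for m j
    using cinner_sum_orth[OF w(1) _, of j "\<lambda>i. cinner (u m) (w i)"] that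
    by (simp add: y_def P_def cinner_diff_left)
  have PK: "P x \<in> K" for x
    unfolding P_def using w(2) by (auto intro!: csubspace_sum[OF K] csubspace_scaleC[OF K])
  have yK: "y m \<in> K" for m unfolding y_def using u(2) PK by (simp add: csubspace_diff[OF K])
  have yP: "cinner (y m) (P (u m)) = 0" for m
    unfolding P_def by (simp add: cinner_sum_right cinner_scaleC_right yorth)
  have ny: "(norm (y m))^2 = 1 - (norm (P (u m)))^2" for m
    using pythagoras[OF yP[of m]] nu[of m] by (simp add: y_def)
  have ny1: "norm (y m) \<le> 1" for m
  proof -
    have "(norm (y m))^2 \<le> 1^2" using ny[of m] by simp
    then show ?thesis by (rule power2_le_imp_le) simp
  qed
  have P0: "(\<lambda>m. P (u m)) \<longlonglongrightarrow> 0"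
  proof -
    have "(\<lambda>m. \<Sum>i<p. scaleC (cinner (u m) (w i)) (w i)) \<longlonglongrightarrow> (\<Sum>i<p. scaleC 0 (w i))"
      by (intro tendsto_sum bounded_linear.tendsto[OF bl_scaleC_left] orthonormal_seq_coeff_zero(2)[OF u(1)])
    then show ?thesis by (simp add: P_def)
  qed
  have nP0: "(\<lambda>m. norm (P (u m))) \<longlonglongrightarrow> 0" using P0 by (simp add: tendsto_norm_zero_iff)
  have ny2: "(\<lambda>m. (norm (y m))^2) \<longlonglongrightarrow> 1"
    using tendsto_diff[OF tendsto_const[of 1] tendsto_power[OF nP0, of 2]] by (simp add: ny)
  have diff0: "(\<lambda>m. cinner (blinfun_apply T (y m)) (y m) - cinner (blinfun_apply T (u m)) (u m)) \<longlonglongrightarrow> 0"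
  proof (rule Lim_null_comparison)
    show "\<forall>\<^sub>F m in sequentially. norm (cinner (blinfun_apply T (y m)) (y m) - cinner (blinfun_apply T (u m)) (u m)) \<le> 2 * norm T * norm (P (u m))"
    proof (intro always_eventually allI)
      fix m
      have eq: "cinner (blinfun_apply T (y m)) (y m) - cinner (blinfun_apply T (u m)) (u m)
        = - cinner (blinfun_apply T (P (u m))) (y m) - cinner (blinfun_apply T (u m)) (P (u m))"
        by (simp add: y_def blinfun.diff_right cinner_diff_left cinner_diff_right)
      have a: "cmod (cinner (blinfun_apply T (P (u m))) (y m)) \<le> norm T * norm (P (u m))"
      proof -
        have "cmod (cinner (blinfun_apply T (P (u m))) (y m)) \<le> norm (blinfun_apply T (P (u m))) * norm (y m)"
          by (rule cauchy_schwarz)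
        also have "\<dots> \<le> (norm T * norm (P (u m))) * 1"
          by (intro mult_mono norm_blinfun ny1) auto
        finally show ?thesis by simp
      qed
      have b: "cmod (cinner (blinfun_apply T (u m)) (P (u m))) \<le> norm T * norm (P (u m))"
      proof -
        have "cmod (cinner (blinfun_apply T (u m)) (P (u m))) \<le> norm (blinfun_apply T (u m)) * norm (P (u m))"
          by (rule cauchy_schwarz)
        also have "\<dots> \<le> (norm T * 1) * norm (P (u m))"
          by (intro mult_mono) (use norm_blinfun[of T "u m"] nu[of m] in auto)
        finally show ?thesis by simp
      qed
      show "norm (cinner (blinfun_apply T (y m)) (y m) - cinner (blinfun_apply T (u m)) (u m)) \<le> 2 * norm T * norm (P (u m))"
        unfolding eq using norm_triangle_ineq4[of "- cinner (blinfun_apply T (P (u m))) (y m)" "cinner (blinfun_apply T (u m)) (P (u m))"] a b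
        by simp
    qed
    show "(\<lambda>m. 2 * norm T * norm (P (u m))) \<longlonglongrightarrow> 0"
      using tendsto_mult[OF tendsto_const nP0, of "2 * norm T"] by simp
  qed
  have valy: "(\<lambda>m. cinner (blinfun_apply T (y m)) (y m)) \<longlonglongrightarrow> l"
    using tendsto_add[OF diff0 lim] by simp
  define x where "x m = scaleR (1 / norm (y m)) (y m)" for m
  have valx_eq: "cinner (blinfun_apply T (x m)) (x m) = cinner (blinfun_apply T (y m)) (y m) / of_real ((norm (y m))^2)" for m
  proof -
    define r where "r = 1 / norm (y m)"
    have "cinner (blinfun_apply T (x m)) (x m) = of_real r * (of_real r * cinner (blinfun_apply T (y m)) (y m))"
      by (simp add: x_def r_def blinfun.scaleR_right cinner_scaleR_left cinner_scaleR_right)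
    also have "\<dots> = of_real (r * r) * cinner (blinfun_apply T (y m)) (y m)" by simp
    also have "r * r = 1 / (norm (y m))^2" by (simp add: r_def power2_eq_square)
    finally show ?thesis by (simp add: divide_inverse mult.commute)
  qed
  have valx: "(\<lambda>m. cinner (blinfun_apply T (x m)) (x m)) \<longlonglongrightarrow> l / of_real 1"
    unfolding valx_eq
    by (intro tendsto_divide valy tendsto_of_real ny2) simp
  have ev1: "\<forall>\<^sub>F m in sequentially. cmod (cinner (blinfun_apply T (x m)) (x m) - l) < e"
    using valx e unfolding tendsto_iff dist_norm by simp
  have ev2: "\<forall>\<^sub>F m in sequentially. (norm (y m))^2 > 1/2"
  proof -
    have "\<forall>\<^sub>F m in sequentially. dist ((norm (y m))^2) 1 < 1/2" using tendstoD[OF ny2, of "1/2"] by simp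
    then show ?thesis by (rule eventually_mono) (simp add: dist_real_def abs_if split: if_splits)
  qed
  obtain m where m1: "cmod (cinner (blinfun_apply T (x m)) (x m) - l) < e" and m2: "(norm (y m))^2 > 1/2"
    using eventually_conj[OF ev1 ev2] eventually_sequentially by auto
  have yne: "norm (y m) \<noteq> 0" using m2 by auto
  show ?thesis
  proof (intro bexI conjI allI impI)
    show "x m \<in> K" unfolding x_def by (rule csubspace_scaleR[OF K yK])
    show "norm (x m) = 1" using yne by (simp add: x_def)
    show "cinner (x m) (w i) = 0" if "i < p" for i
      using yorth[OF that] by (simp add: x_def cinner_scaleR_left)
    show "cmod (cinner (blinfun_apply T (x m)) (x m) - l) < e" by (rule m1)
  qed
qed




lemma orthonormal_norm: "orthonormal_seq u \<Longrightarrow> norm (u m) = 1"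
proof -
  assume "orthonormal_seq u"
  then have "cinner (u m) (u m) = 1" by (simp add: orthonormal_seq_def)
  then have "(norm (u m))^2 = 1" by (metis cinner_self of_real_eq_1_iff)
  then show ?thesis using norm_ge_zero[of "u m"] by (simp add: power2_eq_1_iff)
qed

lemma build:
  fixes K :: "'a::chilbert set" and Good :: "nat \<Rightarrow> 'a \<Rightarrow> bool"
  assumes step: "\<And>n (w::nat \<Rightarrow> 'a). orthonormal_on {..<n} w \<Longrightarrow> (\<forall>i<n. w i \<in> K) \<Longrightarrow>
      \<exists>x\<in>K. norm x = 1 \<and> (\<forall>i<n. cinner x (w i) = 0) \<and> Good n x"
  shows "\<exists>u. orthonormal_seq u \<and> (\<forall>n. u n \<in> K) \<and> (\<forall>n. Good n (u n))"
proof -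
  define P where "P n w \<longleftrightarrow> orthonormal_on {..<n} w \<and> (\<forall>i<n. w i \<in> K \<and> Good i (w i))" for n w
  define Q where "Q n w w' \<longleftrightarrow> (\<forall>i<n. w' i = w i)" for n and w w' :: "nat \<Rightarrow> 'a"
  have 1: "\<exists>w. P 0 w" by (simp add: P_def orthonormal_on_def)
  have 2: "\<exists>w'. P (Suc n) w' \<and> Q n w w'" if "P n w" for n w
  proof -
    from that have o: "orthonormal_on {..<n} w" and kg: "\<forall>i<n. w i \<in> K \<and> Good i (w i)"
      by (auto simp: P_def)
    obtain x where x: "x \<in> K" "norm x = 1" "\<forall>i<n. cinner x (w i) = 0" "Good n x"
      using step[OF o] kg by blast
    have xx: "cinner x x = 1" using x(2) by (simp add: cinner_self)
    have wx: "cinner (w i) x = 0" if "i < n" for i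
      using x(3) that cinner_commute[of x "w i"] by simp
    have A: "orthonormal_on {..<Suc n} (w(n := x))"
      unfolding orthonormal_on_def
    proof (intro ballI)
      fix i j assume "i \<in> {..<Suc n}" "j \<in> {..<Suc n}"
      then show "cinner ((w(n := x)) i) ((w(n := x)) j) = (if i = j then 1 else 0)"
        using o x(3) wx xx unfolding orthonormal_on_def
        by (cases "i = n"; cases "j = n") auto
    qed
    have B: "\<forall>i<Suc n. (w(n := x)) i \<in> K \<and> Good i ((w(n := x)) i)"
      using kg x less_Suc_eq by auto
    have "P (Suc n) (w(n := x))" unfolding P_def using A B by blast
    moreover have "Q n w (w(n := x))" by (simp add: Q_def)
    ultimately show ?thesis by blast
  qed
  obtain f where f: "\<forall>n. P n (f n) \<and> Q n (f n) (f (Suc n))"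
    using dependent_nat_choice[of P Q, OF 1 2] by blast
  have stab: "f n i = f m i" if "m \<le> n" "i < m" for m n i
    using that
  proof (induction n)
    case 0 then show ?case by simp
  next
    case (Suc n)
    show ?case
    proof (cases "m = Suc n")
      case True then show ?thesis by simp
    next
      case False
      then have "m \<le> n" using Suc by simp
      then show ?thesis using Suc f unfolding Q_def by auto
    qed
  qed
  define u where "u n = f (Suc n) n" for n
  have uf: "u i = f N i" if "i < N" for i N
    unfolding u_def using stab[of "Suc i" N i] that by simp
  have "orthonormal_seq u"
    unfolding orthonormal_seq_def
  proof (intro allI)
    fix i j
    let ?N = "Suc (max i j)"
    have "orthonormal_on {..<?N} (f ?N)" using f by (simp add: P_def)
    then show "cinner (u i) (u j) = (if i = j then 1 else 0)"
      using uf[of i ?N] uf[of j ?N] unfolding orthonormal_on_def by auto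
  qed
  moreover have "u n \<in> K \<and> Good n (u n)" for n
    using f[rule_format, of "Suc n"] by (simp add: P_def u_def)
  ultimately show ?thesis by blast
qed

lemma orthonormal_inj: "orthonormal_seq e \<Longrightarrow> inj e"
  unfolding inj_def orthonormal_seq_def
proof (intro allI impI)
  fix i j assume h: "\<forall>n m. cinner (e n) (e m) = (if n = m then 1 else 0)" and eq: "e i = e j"
  have "cinner (e i) (e j) = 1" using h[rule_format, of i i] eq by simp
  then show "i = j" using h[rule_format, of i j] by (auto split: if_splits)
qed

lemma orthonormal_independent:
  assumes "orthonormal_seq e" shows "cvs.independent (range e)"
  unfolding cvs.dependent_explicit
proof clarify
  fix t c v assume t: "finite t" "t \<subseteq> range e" and s: "(\<Sum>v\<in>t. scaleC (c v) v) = 0"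
    and v: "v \<in> t" "c v \<noteq> 0"
  have "cinner (\<Sum>v\<in>t. scaleC (c v) v) v = (\<Sum>w\<in>t. c w * cinner w v)"
    by (simp add: cinner_sum_left cinner_scaleC_left)
  also have "\<dots> = (\<Sum>w\<in>t. if w = v then c w else 0)"
  proof (intro sum.cong refl)
    fix w assume "w \<in> t"
    then obtain i j where ij: "w = e i" "v = e j" using t v by blast
    show "c w * cinner w v = (if w = v then c w else 0)"
    proof (cases "w = v")
      case True then show ?thesis using assms ij unfolding orthonormal_seq_def by simp
    next
      case False then have "i \<noteq> j" using ij by auto
      then show ?thesis using False assms ij unfolding orthonormal_seq_def by simp
    qed
  qed
  also have "\<dots> = c v" using t v by simp
  finally show False using s v by simp
qed

lemma orthonormal_inf_dim:
  assumes e: "orthonormal_seq e" and M: "range e \<subseteq> M"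
  shows "inf_dim M"
  unfolding inf_dim_def
proof (intro allI impI)
  fix F assume F: "finite F \<and> F \<subseteq> M"
  show "cspan F \<noteq> M"
  proof
    assume "cspan F = M"
    then have "range e \<subseteq> cvs.span F" using M by (simp add: cspan_eq)
    then have "finite (range e)" using cvs.independent_span_bound[OF _ orthonormal_independent[OF e]] F by blast
    then show False using orthonormal_inj[OF e] range_inj_infinite by blast
  qed
qed

lemma ext_unit:
  assumes inf: "inf_dim (UNIV :: 'a::chilbert set)" and w: "orthonormal_on {..<n} (w :: nat \<Rightarrow> 'a)"
  shows "\<exists>x. norm x = 1 \<and> (\<forall>i<n. cinner x (w i) = 0)"
proof -
  have "cspan (w ` {..<n}) \<noteq> UNIV" using inf[unfolded inf_dim_def, rule_format, of "w ` {..<n}"] by simp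
  then have "cvs.span (w ` {..<n}) \<noteq> UNIV" by (simp add: cspan_eq)
  then obtain z where z: "z \<notin> cvs.span (w ` {..<n})" by blast
  define y where "y = z - (\<Sum>i<n. scaleC (cinner z (w i)) (w i))"
  have yne: "y \<noteq> 0"
  proof
    assume "y = 0"
    then have "z = (\<Sum>i<n. scaleC (cinner z (w i)) (w i))" by (simp add: y_def)
    moreover have "(\<Sum>i<n. scaleC (cinner z (w i)) (w i)) \<in> cvs.span (w ` {..<n})"
      by (intro cvs.span_sum cvs.span_scale cvs.span_base) auto
    ultimately show False using z by simp
  qed
  have yo: "cinner y (w i) = 0" if "i < n" for i
    using cinner_sum_orth[OF w _, of i "\<lambda>i. cinner z (w i)"] that by (simp add: y_def cinner_diff_left)
  have "norm (scaleR (1 / norm y) y) = 1" using yne by simp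
  moreover have "\<forall>i<n. cinner (scaleR (1 / norm y) y) (w i) = 0" using yo by (simp add: cinner_scaleR_left)
  ultimately show ?thesis by blast
qed

lemma cproj_char:
  fixes M :: "'a::chilbert set"
  assumes M: "csubspace M" and ex: "\<exists>y\<in>M. \<forall>z\<in>M. cinner (x - y) z = 0"
  shows "cproj M x \<in> M \<and> (\<forall>z\<in>M. cinner (x - cproj M x) z = 0)"
proof -
  have uniq: "y1 = y2" if "y1 \<in> M" "\<forall>z\<in>M. cinner (x - y1) z = 0" "y2 \<in> M" "\<forall>z\<in>M. cinner (x - y2) z = 0" for y1 y2
  proof -
    have d: "y1 - y2 \<in> M" using that csubspace_diff[OF M] by blast
    have "cinner (y1 - y2) (y1 - y2) = cinner (x - y2) (y1 - y2) - cinner (x - y1) (y1 - y2)"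
      by (simp add: cinner_diff_left)
    also have "\<dots> = 0" using that d by simp
    finally have "(norm (y1 - y2))^2 = 0" using cinner_self[of "y1 - y2"] by simp
    then show ?thesis by simp
  qed
  have "\<exists>!y. y \<in> M \<and> (\<forall>z\<in>M. cinner (x - y) z = 0)" using ex uniq by blast
  then show ?thesis unfolding cproj_def by (rule theI')
qed

lemma proj_exists:
  fixes e :: "nat \<Rightarrow> 'a::chilbert"
  assumes e: "orthonormal_seq e"
  shows "\<exists>y\<in>closure (cspan (range e)). \<forall>z\<in>closure (cspan (range e)). cinner (x - y) z = 0"
proof -
  define s where "s N = (\<Sum>m<N. scaleC (cinner x (e m)) (e m))" for N
  define f where "f m = (cmod (cinner x (e m)))^2" for m
  have sumf: "summable f"
    unfolding f_def
    by (rule summableI_nonneg_bounded[where x="(norm x)^2"])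
       (auto intro!: bessel orthonormal_seq_on e)
  have diffn: "(norm (s n - s m))^2 = sum f {m..<n}" if "m \<le> n" for m n
  proof -
    have "s n - s m = (\<Sum>i\<in>{m..<n}. scaleC (cinner x (e i)) (e i))"
      unfolding s_def lessThan_atLeast0 using sum_diff_nat_ivl[of 0 m n] that by simp
    then show ?thesis unfolding f_def
      by (simp add: norm_sum_orth orthonormal_seq_on[OF e])
  qed
  have fnn: "0 \<le> sum f A" for A by (simp add: f_def sum_nonneg)
  have "Cauchy s"
    unfolding Cauchy_def
  proof (intro allI impI)
    fix r :: real assume r: "r > 0"
    then have r2: "r^2 > 0" by simp
    obtain N where N: "\<forall>m\<ge>N. \<forall>n. norm (sum f {m..<n}) < r^2"
      using summable_Cauchy[THEN iffD1, OF sumf, rule_format, OF r2] by blast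
    have "dist (s m) (s n) < r" if mn: "m \<ge> N" "n \<ge> N" for m n
    proof -
      have "(dist (s m) (s n))^2 < r^2"
      proof (cases "m \<le> n")
        case True
        then have "(dist (s m) (s n))^2 = sum f {m..<n}"
          using diffn[OF True] by (simp add: dist_norm norm_minus_commute)
        also have "\<dots> < r^2" using N[rule_format, OF mn(1), of n] fnn[of "{m..<n}"] by simp
        finally show ?thesis .
      next
        case False
        then have "(dist (s m) (s n))^2 = sum f {n..<m}"
          using diffn[of n m] by (simp add: dist_norm)
        also have "\<dots> < r^2" using N[rule_format, OF mn(2), of m] fnn[of "{n..<m}"] by simp
        finally show ?thesis .
      qed
      then show ?thesis using r by (simp add: power_less_imp_less_base)
    qed
    then show "\<exists>M. \<forall>m\<ge>M. \<forall>n\<ge>M. dist (s m) (s n) < r" by blast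
  qed
  then obtain y where y: "s \<longlonglongrightarrow> y" unfolding Cauchy_convergent_iff convergent_def by blast
  have sin: "s N \<in> cspan (range e)" for N
    unfolding s_def cspan_eq by (intro cvs.span_sum cvs.span_scale cvs.span_base) auto
  have yM: "y \<in> closure (cspan (range e))"
    unfolding closure_sequential by (intro exI[of _ s]) (use sin y in simp)
  have orth: "cinner (x - y) (e j) = 0" for j
  proof -
    have "(\<lambda>N. cinner (x - s (N + Suc j)) (e j)) \<longlonglongrightarrow> cinner (x - y) (e j)"
      by (intro bounded_linear.tendsto[OF bl_cinner_left] tendsto_diff tendsto_const LIMSEQ_ignore_initial_segment y)
    moreover have "cinner (x - s (N + Suc j)) (e j) = 0" for N
      using cinner_sum_orth[OF orthonormal_seq_on[OF e], of "{..<N + Suc j}" j "\<lambda>m. cinner x (e m)"]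
      by (simp add: s_def cinner_diff_left)
    ultimately have "(\<lambda>N. 0) \<longlonglongrightarrow> cinner (x - y) (e j)" by simp
    then show ?thesis by (simp add: LIMSEQ_const_iff)
  qed
  have "closure (cspan (range e)) \<subseteq> {z. cinner (x - y) z = 0}"
  proof (rule closure_cspan_min)
    show "range e \<subseteq> {z. cinner (x - y) z = 0}" using orth by auto
  qed (rule closed_orth', rule csubspace_orth')
  then show ?thesis using yM by blast
qed

lemma dense_seq:
  fixes G :: "('b::{metric_space,second_countable_topology}) set"
  assumes "G \<noteq> {}"
  shows "\<exists>s::nat \<Rightarrow> 'b. (\<forall>j. s j \<in> G) \<and> (\<forall>g\<in>G. \<forall>e>0. \<exists>j. dist (s j) g < e)"
proof -
  obtain D :: "'b set" where D: "countable D" "\<And>X. open X \<Longrightarrow> X \<noteq> {} \<Longrightarrow> \<exists>d\<in>D. d \<in> X"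
    using countable_dense_exists by blast
  define Q where "Q = {(d, n::nat). d \<in> D \<and> G \<inter> ball d (1 / (Suc n)) \<noteq> {}}"
  define p where "p = (\<lambda>(d, n::nat). SOME g. g \<in> G \<inter> ball d (1 / (Suc n)))"
  obtain g0 where g0: "g0 \<in> G" using assms by blast
  define S where "S = insert g0 (p ` Q)"
  have "Q \<subseteq> D \<times> UNIV" unfolding Q_def by auto
  moreover have "countable (D \<times> (UNIV :: nat set))" using D(1) by (intro countable_SIGMA) auto
  ultimately have Qc: "countable Q" by (rule countable_subset)
  have Sc: "countable S" "S \<noteq> {}" unfolding S_def using Qc by (simp_all add: countable_image)
  have pQ: "p q \<in> G \<inter> ball (fst q) (1 / Suc (snd q))" if "q \<in> Q" for q
  proof -
    obtain d k where q: "q = (d, k)" by fastforce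
    have "\<exists>g. g \<in> G \<inter> ball d (1 / Suc k)" using that q unfolding Q_def by auto
    then have "(SOME g. g \<in> G \<inter> ball d (1 / Suc k)) \<in> G \<inter> ball d (1 / Suc k)" by (rule someI_ex)
    then show ?thesis unfolding p_def q by simp
  qed
  have SG: "S \<subseteq> G" unfolding S_def using g0 pQ by blast
  define s where "s = from_nat_into S"
  have rs: "range s = S" unfolding s_def by (rule range_from_nat_into[OF Sc(2) Sc(1)])
  have "\<exists>j. dist (s j) g < e" if g: "g \<in> G" and e: "e > 0" for g e
  proof -
    obtain n :: nat where n: "1 / Suc n < e / 2"
      by (rule nat_approx_posE[of "e/2"]) (use e in auto)
    have "ball g (1 / Suc n) \<noteq> {}" using centre_in_ball[of g "1 / Suc n"] by auto
    then obtain d where d: "d \<in> D" "d \<in> ball g (1 / Suc n)" using D(2)[of "ball g (1 / Suc n)"] by blast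
    have "(d, n) \<in> Q" unfolding Q_def using d g by (auto simp: dist_commute)
    then have pq: "p (d, n) \<in> S" "dist d (p (d, n)) < 1 / Suc n" using pQ[of "(d, n)"] unfolding S_def by auto
    have "dist (p (d, n)) g \<le> dist (p (d, n)) d + dist d g" by (rule dist_triangle)
    also have "\<dots> < e" using pq(2) d(2) n by (simp add: dist_commute)
    finally have "dist (p (d, n)) g < e" .
    moreover have "p (d, n) \<in> range s" using pq(1) rs by simp
    then obtain j where "s j = p (d, n)" by (metis rangeE)
    ultimately show ?thesis by (intro exI[of _ j]) simp
  qed
  moreover have "\<forall>j. s j \<in> G"
  proof
    fix j have "s j \<in> range s" by (rule rangeI)
    then show "s j \<in> G" using SG rs by blast
  qed
  ultimately have X: "(\<forall>j. s j \<in> G) \<and> (\<forall>g\<in>G. \<forall>e>0. \<exists>j. dist (s j) g < e)" by blast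
  show ?thesis by (rule exI[of _ s]) (rule X)
qed




lemma orthonormal_comp: "orthonormal_seq v \<Longrightarrow> inj g \<Longrightarrow> orthonormal_seq (\<lambda>i. v (g i))"
  unfolding orthonormal_seq_def inj_def by auto

lemma approx_tendsto:
  fixes f :: "nat \<Rightarrow> complex"
  assumes "\<forall>n. cmod (f n - l) < 1 / Suc n" shows "f \<longlonglongrightarrow> l"
proof -
  have "(\<lambda>n. f n - l) \<longlonglongrightarrow> 0"
  proof (rule Lim_null_comparison)
    show "\<forall>\<^sub>F n in sequentially. norm (f n - l) \<le> inverse (real (Suc n))"
      using assms by (intro always_eventually allI) (simp add: less_imp_le divide_inverse)
  qed (rule LIMSEQ_inverse_real_of_nat)
  then show ?thesis by (simp add: LIM_zero_iff)
qed

lemma val_bound: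
  fixes T :: "'a::chilbert \<Rightarrow>\<^sub>L 'a"
  assumes "norm x = 1" shows "cmod (cinner (blinfun_apply T x) x) \<le> norm T"
proof -
  have "cmod (cinner (blinfun_apply T x) x) \<le> norm (blinfun_apply T x) * norm x" by (rule cauchy_schwarz)
  also have "\<dots> \<le> norm T * norm x * norm x" using norm_blinfun[of T x] by (simp add: mult_right_mono)
  finally show ?thesis using assms by simp
qed

lemma ess_nonempty:
  fixes T :: "'a::chilbert \<Rightarrow>\<^sub>L 'a" and e :: "nat \<Rightarrow> 'a"
  assumes "orthonormal_seq e"
  shows "ess_numrange UNIV (blinfun_apply T) \<noteq> {}"
proof -
  define c where "c m = cinner (blinfun_apply T (e m)) (e m)" for m
  have "c m \<in> cball 0 (norm T)" for m
    using val_bound[OF orthonormal_norm[OF assms]] by (simp add: c_def)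
  then obtain l r where r: "strict_mono r" "(c \<circ> r) \<longlonglongrightarrow> l"
    using compact_cball[of 0 "norm T"] unfolding compact_def by blast
  have "orthonormal_seq (\<lambda>i. e (r i))"
    by (rule orthonormal_comp[OF assms strict_mono_imp_inj_on[OF r(1)]])
  then have "l \<in> ess_numrange UNIV (blinfun_apply T)"
    unfolding ess_numrange_def using r(2) by (auto simp: c_def o_def)
  then show ?thesis by blast
qed




theorem lemma6p1:
  fixes A :: "real \<Rightarrow> ('a::chilbert \<Rightarrow>\<^sub>L 'a)"
  assumes "inf_dim (UNIV :: 'a set)"
    and "separable_space TYPE('a)"
    and "continuous_on {0..1} A"
    and "\<forall>t\<in>{0..1}. clinear_op (A t)"
  shows "\<exists>M :: nat \<Rightarrow> 'a set.
           (\<forall>k. closed (M k) \<and> csubspace (M k) \<and> inf_dim (M k)) \<and>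
           (\<forall>k l. k \<noteq> l \<longrightarrow> (\<forall>x\<in>M k. \<forall>y\<in>M l. cinner x y = 0)) \<and>
           (\<forall>k. \<forall>t\<in>{0..1}.
              ess_numrange (M k) (\<lambda>x. cproj (M k) (blinfun_apply (A t) x))
                = ess_numrange UNIV (blinfun_apply (A t)))"
proof -
  have "\<exists>u. orthonormal_seq u \<and> (\<forall>n. u n \<in> (UNIV :: 'a set)) \<and> (\<forall>n::nat. True)"
    by (rule build[where K=UNIV and Good="\<lambda>_ _. True"]) (use ext_unit[OF assms(1)] in auto)
  then obtain e0 :: "nat \<Rightarrow> 'a" where e0: "orthonormal_seq e0" by blast
  define G where "G = {(t, l). t \<in> {0..1::real} \<and> l \<in> ess_numrange UNIV (blinfun_apply (A t))}"
  obtain l0 where "l0 \<in> ess_numrange UNIV (blinfun_apply (A 0))"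
    using ess_nonempty[OF e0, of "A 0"] by blast
  then have "(0, l0) \<in> G" by (simp add: G_def)
  then have Gne: "G \<noteq> {}" by blast
  obtain s :: "nat \<Rightarrow> real \<times> complex" where s: "\<forall>j. s j \<in> G" "\<forall>g\<in>G. \<forall>e>0. \<exists>j. dist (s j) g < e"
    using dense_seq[OF Gne] by blast
  define tj where "tj j = fst (s j)" for j
  define lj where "lj j = snd (s j)" for j
  have sj: "tj j \<in> {0..1} \<and> lj j \<in> ess_numrange UNIV (blinfun_apply (A (tj j)))" for j
  proof -
    have "s j \<in> G" using s(1) by blast
    then show ?thesis by (cases "s j") (simp add: G_def tj_def lj_def)
  qed
  define jj where "jj n = fst (prod_decode (snd (prod_decode n)))" for n
  define ii where "ii n = snd (prod_decode (snd (prod_decode n)))" for n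
  have "\<exists>v. orthonormal_seq v \<and> (\<forall>n. v n \<in> (UNIV :: 'a set)) \<and>
     (\<forall>n. cmod (cinner (blinfun_apply (A (tj (jj n))) (v n)) (v n) - lj (jj n)) < 1 / Suc (ii n))"
  proof (rule build[where K=UNIV and Good="\<lambda>n x. cmod (cinner (blinfun_apply (A (tj (jj n))) x) x - lj (jj n)) < 1 / Suc (ii n)"])
    fix n and w :: "nat \<Rightarrow> 'a" assume w: "orthonormal_on {..<n} w" "\<forall>i<n. w i \<in> UNIV"
    obtain u where u: "\<forall>m. u m \<in> UNIV" "orthonormal_seq u"
      "(\<lambda>m. cinner (blinfun_apply (A (tj (jj n))) (u m)) (u m)) \<longlonglongrightarrow> lj (jj n)"
      using sj[of "jj n"] unfolding ess_numrange_def by blast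
    have K: "csubspace (UNIV :: 'a set)" by (simp add: csubspace_def)
    show "\<exists>x\<in>UNIV. norm x = 1 \<and> (\<forall>i<n. cinner x (w i) = 0) \<and>
        cmod (cinner (blinfun_apply (A (tj (jj n))) x) x - lj (jj n)) < 1 / Suc (ii n)"
      by (rule key[OF K u(2) u(1) u(3) w(1) w(2)]) simp
  qed
  then obtain v :: "nat \<Rightarrow> 'a" where v: "orthonormal_seq v"
    "\<forall>n. cmod (cinner (blinfun_apply (A (tj (jj n))) (v n)) (v n) - lj (jj n)) < 1 / Suc (ii n)"
    by blast
  define E where "E k m = v (prod_encode (k, m))" for k m
  define M where "M k = closure (cspan (range (E k)))" for k
  have Eo: "orthonormal_seq (E k)" for k
    unfolding E_def by (rule orthonormal_comp[OF v(1)]) (auto simp: inj_def prod_encode_eq)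
  have EM: "E k m \<in> M k" for k m
  proof -
    have "E k m \<in> cspan (range (E k))" by (rule subsetD[OF cspan_superset]) simp
    then show ?thesis unfolding M_def by (rule subsetD[OF closure_subset])
  qed
  have Msub: "csubspace (M k)" for k
    unfolding M_def by (intro csubspace_closure csubspace_cspan)
  have Mclosed: "closed (M k)" for k unfolding M_def by (rule closed_closure)
  have Minf: "inf_dim (M k)" for k
    by (rule orthonormal_inf_dim[OF Eo]) (use EM in blast)
  have proj: "cproj (M k) x \<in> M k \<and> (\<forall>z\<in>M k. cinner (x - cproj (M k) x) z = 0)" for k x
  proof -
    have "\<exists>y\<in>M k. \<forall>z\<in>M k. cinner (x - y) z = 0" unfolding M_def by (rule proj_exists[OF Eo])
    then show ?thesis by (rule cproj_char[OF Msub])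
  qed
  have projval: "cinner (cproj (M k) y) u = cinner y u" if "u \<in> M k" for k y u
    using proj[of k y] that by (simp add: cinner_diff_left)
  have orth: "cinner x y = 0" if kl: "k \<noteq> l" and x: "x \<in> M k" and y: "y \<in> M l" for k l x y
  proof -
    have A1: "M k \<subseteq> {x. cinner x (E l n) = 0}" for n
      unfolding M_def
    proof (rule closure_cspan_min)
      show "range (E k) \<subseteq> {x. cinner x (E l n) = 0}"
        using v(1) kl unfolding E_def orthonormal_seq_def by (auto simp: prod_encode_eq)
    qed (rule closed_orth, rule csubspace_orth)
    have "M l \<subseteq> {y. cinner x y = 0}"
      unfolding M_def
    proof (rule closure_cspan_min)
      show "range (E l) \<subseteq> {y. cinner x y = 0}" using A1 x by blast
    qed (rule closed_orth', rule csubspace_orth')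
    then show ?thesis using y by blast
  qed
  have main: "ess_numrange (M k) (\<lambda>x. cproj (M k) (blinfun_apply (A t) x))
                = ess_numrange UNIV (blinfun_apply (A t))" if t: "t \<in> {0..1}" for k t
  proof
    show "ess_numrange (M k) (\<lambda>x. cproj (M k) (blinfun_apply (A t) x)) \<subseteq> ess_numrange UNIV (blinfun_apply (A t))"
    proof
      fix l assume "l \<in> ess_numrange (M k) (\<lambda>x. cproj (M k) (blinfun_apply (A t) x))"
      then obtain u where u: "\<forall>n. u n \<in> M k" "orthonormal_seq u"
        "(\<lambda>n. cinner (cproj (M k) (blinfun_apply (A t) (u n))) (u n)) \<longlonglongrightarrow> l"
        unfolding ess_numrange_def by blast
      have "(\<lambda>n. cinner (blinfun_apply (A t) (u n)) (u n)) \<longlonglongrightarrow> l"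
        using u(3) projval[OF u(1)[rule_format]] by simp
      then show "l \<in> ess_numrange UNIV (blinfun_apply (A t))"
        unfolding ess_numrange_def using u(2) by blast
    qed
  next
    show "ess_numrange UNIV (blinfun_apply (A t)) \<subseteq> ess_numrange (M k) (\<lambda>x. cproj (M k) (blinfun_apply (A t) x))"
    proof
      fix l assume hl: "l \<in> ess_numrange UNIV (blinfun_apply (A t))"
      then have tlG: "(t, l) \<in> G" using t by (simp add: G_def)
      have "\<exists>u. orthonormal_seq u \<and> (\<forall>n. u n \<in> M k) \<and>
         (\<forall>n. cmod (cinner (blinfun_apply (A t) (u n)) (u n) - l) < 1 / Suc n)"
      proof (rule build[where K="M k" and Good="\<lambda>n x. cmod (cinner (blinfun_apply (A t) x) x - l) < 1 / Suc n"])
        fix n and w :: "nat \<Rightarrow> 'a" assume w: "orthonormal_on {..<n} w" "\<forall>i<n. w i \<in> M k"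
        define \<epsilon> :: real where "\<epsilon> = 1 / Suc n"
        have \<epsilon>: "\<epsilon> > 0" by (simp add: \<epsilon>_def)
        obtain \<delta> where \<delta>: "\<delta> > 0" "\<forall>t'\<in>{0..1}. dist t' t < \<delta> \<longrightarrow> dist (A t') (A t) < \<epsilon> / 3"
          using assms(3)[unfolded continuous_on_iff, rule_format, OF t, of "\<epsilon> / 3"] \<epsilon> by auto
        have "min \<delta> (\<epsilon> / 3) > 0" using \<delta> \<epsilon> by simp
        then obtain j where j: "dist (s j) (t, l) < min \<delta> (\<epsilon> / 3)" using s(2) tlG by blast
        have jt: "dist (tj j) t < \<delta>" using j dist_fst_le[of "s j" "(t, l)"] by (simp add: tj_def)
        have jl: "dist (lj j) l < \<epsilon> / 3" using j dist_snd_le[of "s j" "(t, l)"] by (simp add: lj_def)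
        have At: "dist (A (tj j)) (A t) < \<epsilon> / 3" using \<delta>(2) jt sj[of j] by blast
        define uu where "uu i = E k (prod_encode (j, i))" for i
        have uuo: "orthonormal_seq uu"
          unfolding uu_def by (rule orthonormal_comp[OF Eo]) (auto simp: inj_def prod_encode_eq)
        have uuM: "\<forall>i. uu i \<in> M k" using EM by (simp add: uu_def)
        have "cmod (cinner (blinfun_apply (A (tj j)) (uu i)) (uu i) - lj j) < 1 / Suc i" for i
          using v(2)[rule_format, of "prod_encode (k, prod_encode (j, i))"]
          by (simp add: uu_def E_def jj_def ii_def)
        then have uulim: "(\<lambda>i. cinner (blinfun_apply (A (tj j)) (uu i)) (uu i)) \<longlonglongrightarrow> lj j"
          by (intro approx_tendsto) blast
        obtain x where x: "x \<in> M k" "norm x = 1" "\<forall>i<n. cinner x (w i) = 0"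
          "cmod (cinner (blinfun_apply (A (tj j)) x) x - lj j) < \<epsilon> / 3"
          using key[OF Msub[of k] uuo uuM uulim w(1) w(2), of "\<epsilon> / 3"] \<epsilon> by auto
        have d1: "cmod (cinner (blinfun_apply (A t) x) x - cinner (blinfun_apply (A (tj j)) x) x) < \<epsilon> / 3"
        proof -
          have "cinner (blinfun_apply (A t) x) x - cinner (blinfun_apply (A (tj j)) x) x
              = cinner (blinfun_apply (A t - A (tj j)) x) x"
            by (simp add: blinfun.diff_left cinner_diff_left)
          also have "cmod \<dots> \<le> norm (A t - A (tj j))" by (rule val_bound[OF x(2)])
          also have "\<dots> < \<epsilon> / 3" using At by (simp add: dist_norm norm_minus_commute)
          finally show ?thesis .
        qed
        have "cmod (cinner (blinfun_apply (A t) x) x - l) \<le>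
            cmod (cinner (blinfun_apply (A t) x) x - cinner (blinfun_apply (A (tj j)) x) x)
            + cmod (cinner (blinfun_apply (A (tj j)) x) x - lj j) + cmod (lj j - l)"
          using norm_triangle_ineq[of "cinner (blinfun_apply (A t) x) x - cinner (blinfun_apply (A (tj j)) x) x"
              "cinner (blinfun_apply (A (tj j)) x) x - lj j"]
            norm_triangle_ineq[of "cinner (blinfun_apply (A t) x) x - lj j" "lj j - l"]
          by simp
        also have "\<dots> < \<epsilon>" using d1 x(4) jl by (simp add: dist_norm)
        finally show "\<exists>x\<in>M k. norm x = 1 \<and> (\<forall>i<n. cinner x (w i) = 0) \<and>
            cmod (cinner (blinfun_apply (A t) x) x - l) < 1 / Suc n"
          using x unfolding \<epsilon>_def by blast
      qed
      then obtain u where u: "orthonormal_seq u" "\<forall>n. u n \<in> M k"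
        "\<forall>n. cmod (cinner (blinfun_apply (A t) (u n)) (u n) - l) < 1 / Suc n" by blast
      have "(\<lambda>n. cinner (blinfun_apply (A t) (u n)) (u n)) \<longlonglongrightarrow> l" by (rule approx_tendsto[OF u(3)])
      then have "(\<lambda>n. cinner (cproj (M k) (blinfun_apply (A t) (u n))) (u n)) \<longlonglongrightarrow> l"
        using projval[OF u(2)[rule_format]] by simp
      then show "l \<in> ess_numrange (M k) (\<lambda>x. cproj (M k) (blinfun_apply (A t) x))"
        unfolding ess_numrange_def using u(1,2) by blast
    qed
  qed
  show ?thesis
    by (rule exI[of _ M]) (use Mclosed Msub Minf orth main in blast)
qed


end
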